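(* For any $\epsilon>0$, $\delta>0$ and $\mu>0$ there exists an initial datum $b_0$ with $\int_{-\pi}^\pi b_0(x)\,dx=0$ and $$\|b_0-\mu\cos(\cdot)\|_{C^{2-\epsilon}([-\pi,\pi])}\le\delta\mu$$ such that there is no $\tau^*>0$ and no solution $b$ on $[0,\tau^* )$ of $$\partial_\tau b+\Big(\int_{-\pi}^x b(\tau,\bar x)\,d\bar x\Big)\partial_x b-b^2+\frac1\pi\int_{-\pi}^{\pi}b^2\,dx=\frac1\pi\Big(\int_0^\tau\int_{-\pi}^{\pi}b^2(\bar\tau,x)\,dx\,d\bar\tau\Big)\,b,\qquad x\in[-\pi,\pi],$$ with $\int_{-\pi}^\pi b(\tau,x)dx=0$ and $b(0,\cdot)=b_0$, blowing up at time $\tau^*$ and decomposing as $$b(\tau,x)=\frac{1}{\tau^*-\tau}\cos(x)+\tilde b(\tau,x)\quad\text{with}\quad (\tau^*-\tau)\|\tilde b(\tau)\|_{L^\infty([-\pi,\pi])}\to0 \text{ as }\tau\to\tau^*.$$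
   Context: $C^{2-\epsilon}$ denotes the Hölder space of that order on $[-\pi,\pi]$. Solutions are required to satisfy the mean-free condition at all times. *)

theory Defs
  imports "HOL-Analysis.Analysis"
begin

text \<open>Hoelder norm on [-pi,pi] of order s > 0: write s = k + a with k a natural
number and 0 < a \<le> 1 (k = ceiling s - 1). The norm of h is
  sum_{j \<le> k} sup |h^(j)| + sup_{x \<noteq> y} |h^(k)(x) - h^(k)(y)| / |x - y|^a.
Derivatives on the closed interval are one-sided at the endpoints.
Convention: for s \<le> 0 (not a genuine Hoelder exponent) we use the sup norm (k = 0, a = 0).\<close>

definition holder_k :: "real \<Rightarrow> nat" where
  "holder_k s = (if s \<le> 0 then 0 else nat (\<lceil>s\<rceil> - 1))"

definition holder_a :: "real \<Rightarrow> real" where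
  "holder_a s = (if s \<le> 0 then 0 else s - real (holder_k s))"

definition holder_norm_le :: "real \<Rightarrow> (real \<Rightarrow> real) \<Rightarrow> real \<Rightarrow> bool" where
  "holder_norm_le s h C \<longleftrightarrow>
     (\<exists>D :: nat \<Rightarrow> real \<Rightarrow> real. \<exists>M :: nat \<Rightarrow> real. \<exists>H :: real.
        (\<forall>x\<in>{-pi..pi}. D 0 x = h x) \<and>
        (\<forall>j<holder_k s. \<forall>x\<in>{-pi..pi}.
            (D j has_real_derivative D (Suc j) x) (at x within {-pi..pi})) \<and>
        (\<forall>j\<le>holder_k s. \<forall>x\<in>{-pi..pi}. \<bar>D j x\<bar> \<le> M j) \<and>
        (s > 0 \<longrightarrow> (\<forall>x\<in>{-pi..pi}. \<forall>y\<in>{-pi..pi}.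
            \<bar>D (holder_k s) x - D (holder_k s) y\<bar> \<le> H * \<bar>x - y\<bar> powr holder_a s)) \<and>
        (\<Sum>j\<le>holder_k s. M j) + (if s > 0 then H else 0) \<le> C)"

definition is_solution :: "real \<Rightarrow> (real \<Rightarrow> real) \<Rightarrow> (real \<Rightarrow> real \<Rightarrow> real) \<Rightarrow> bool" where
  "is_solution T b0 b \<longleftrightarrow>
     (\<exists>bt bx :: real \<Rightarrow> real \<Rightarrow> real.
        continuous_on ({0..<T} \<times> {-pi..pi}) (\<lambda>(t,x). b t x) \<and>
        continuous_on ({0..<T} \<times> {-pi..pi}) (\<lambda>(t,x). bt t x) \<and>
        continuous_on ({0..<T} \<times> {-pi..pi}) (\<lambda>(t,x). bx t x) \<and>
        (\<forall>t\<in>{0..<T}. \<forall>x\<in>{-pi..pi}.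
           ((\<lambda>s. b s x) has_real_derivative bt t x) (at t within {0..<T}) \<and>
           ((\<lambda>y. b t y) has_real_derivative bx t x) (at x within {-pi..pi}) \<and>
           bt t x + integral {-pi..x} (b t) * bx t x - (b t x)\<^sup>2
             + (1/pi) * integral {-pi..pi} (\<lambda>y. (b t y)\<^sup>2)
           = (1/pi) * integral {0..t} (\<lambda>s. integral {-pi..pi} (\<lambda>y. (b s y)\<^sup>2)) * b t x) \<and>
        (\<forall>t\<in>{0..<T}. integral {-pi..pi} (b t) = 0) \<and>
        (\<forall>x\<in>{-pi..pi}. b 0 x = b0 x))"

text \<open>For the continuous functions
involved the L^infty norm is the supremum over [-pi,pi].\<close>
definition cos_blowup :: "real \<Rightarrow> (real \<Rightarrow> real \<Rightarrow> real) \<Rightarrow> bool" where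
  "cos_blowup T b \<longleftrightarrow>
     ((\<lambda>t. (T - t) * (SUP x\<in>{-pi..pi}. \<bar>b t x - cos x / (T - t)\<bar>)) \<longlongrightarrow> 0) (at_left T)"

end

theory Submission
  imports Defs
begin

lemma cfst: "continuous_on U A \<Longrightarrow> continuous_on (U \<times> V) (\<lambda>z. A (fst z))"
  by (rule continuous_on_compose2[of U A "U \<times> V" fst]) (auto intro: continuous_on_fst continuous_on_id)

locale sol =
  fixes T :: real and b bt bx :: "real \<Rightarrow> real \<Rightarrow> real"
  assumes Tpos: "T > 0"
  and cb: "continuous_on ({0..<T} \<times> {-pi..pi}) (\<lambda>(t,x). b t x)"
  and cbt: "continuous_on ({0..<T} \<times> {-pi..pi}) (\<lambda>(t,x). bt t x)"
  and cbx: "continuous_on ({0..<T} \<times> {-pi..pi}) (\<lambda>(t,x). bx t x)"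
  and dt: "\<And>t x. t\<in>{0..<T} \<Longrightarrow> x\<in>{-pi..pi} \<Longrightarrow> ((\<lambda>s. b s x) has_real_derivative bt t x) (at t within {0..<T})"
  and dx: "\<And>t x. t\<in>{0..<T} \<Longrightarrow> x\<in>{-pi..pi} \<Longrightarrow> ((\<lambda>y. b t y) has_real_derivative bx t x) (at x within {-pi..pi})"
  and eq: "\<And>t x. t\<in>{0..<T} \<Longrightarrow> x\<in>{-pi..pi} \<Longrightarrow> bt t x + integral {-pi..x} (b t) * bx t x - (b t x)\<^sup>2
             + (1/pi) * integral {-pi..pi} (\<lambda>y. (b t y)\<^sup>2)
           = (1/pi) * integral {0..t} (\<lambda>s. integral {-pi..pi} (\<lambda>y. (b s y)\<^sup>2)) * b t x"
  and mf: "\<And>t. t\<in>{0..<T} \<Longrightarrow> integral {-pi..pi} (b t) = 0"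
begin

definition "E t = integral {-pi..pi} (\<lambda>y. (b t y)\<^sup>2)"
definition "p t = integral {0..t} E / pi"
definition "R t w = w\<^sup>2 + p t * w - E t / pi"
definition "Bi t x = integral {-pi..x} (b t)"

lemma bt_eq: "t\<in>{0..<T} \<Longrightarrow> x\<in>{-pi..pi} \<Longrightarrow> bt t x = R t (b t x) - Bi t x * bx t x"
proof -
  assume a: "t\<in>{0..<T}" "x\<in>{-pi..pi}"
  have "bt t x = (1/pi) * integral {0..t} (\<lambda>s. integral {-pi..pi} (\<lambda>y. (b s y)\<^sup>2)) * b t x + (b t x)\<^sup>2
    - (1/pi) * integral {-pi..pi} (\<lambda>y. (b t y)\<^sup>2) - integral {-pi..x} (b t) * bx t x"
    using eq[OF a] by linarith
  then show ?thesis unfolding R_def p_def Bi_def E_def[abs_def] by simp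
qed

lemma cb': "continuous_on ({0..<T} \<times> {-pi..pi}) (\<lambda>z. b (fst z) (snd z))"
  using cb by (simp add: case_prod_beta')
lemma cbt': "continuous_on ({0..<T} \<times> {-pi..pi}) (\<lambda>z. bt (fst z) (snd z))"
  using cbt by (simp add: case_prod_beta')
lemma cbx': "continuous_on ({0..<T} \<times> {-pi..pi}) (\<lambda>z. bx (fst z) (snd z))"
  using cbx by (simp add: case_prod_beta')

lemma cslice:
  assumes "continuous_on ({0..<T} \<times> {-pi..pi}) (\<lambda>z. f (fst z) (snd z))" "t \<in> {0..<T}"
  shows "continuous_on {-pi..pi} (f t)"
proof -
  have "continuous_on {-pi..pi} ((\<lambda>z. f (fst z) (snd z)) \<circ> (\<lambda>x. (t,x)))"
    by (rule continuous_on_compose[OF _ continuous_on_subset[OF assms(1)]]) (use assms(2) in \<open>auto intro!: continuous_intros\<close>)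
  then show ?thesis by (simp add: o_def)
qed

lemma cb_x: "t \<in> {0..<T} \<Longrightarrow> continuous_on {-pi..pi} (b t)" by (rule cslice[OF cb'])
lemma cbx_x: "t \<in> {0..<T} \<Longrightarrow> continuous_on {-pi..pi} (bx t)" by (rule cslice[OF cbx'])

lemma Bi_deriv: "t \<in> {0..<T} \<Longrightarrow> x\<in>{-pi..pi} \<Longrightarrow> (Bi t has_real_derivative b t x) (at x within {-pi..pi})"
  unfolding Bi_def by (rule integral_has_real_derivative[OF cb_x])

lemma Bi_ends: "t \<in> {0..<T} \<Longrightarrow> Bi t pi = 0 \<and> Bi t (-pi) = 0"
  using mf by (simp add: Bi_def)

lemma Bi_cont: "t \<in> {0..<T} \<Longrightarrow> continuous_on {-pi..pi} (Bi t)"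
  using Bi_deriv by (meson DERIV_continuous continuous_on_eq_continuous_within)

lemma ibp:
  assumes t: "t \<in> {0..<T}"
  and dG: "\<And>x. x\<in>{-pi..pi} \<Longrightarrow> (G has_real_derivative G' x) (at x within {-pi..pi})"
  and cG': "continuous_on {-pi..pi} G'"
  shows "integral {-pi..pi} (\<lambda>x. G' x * Bi t x) = - integral {-pi..pi} (\<lambda>x. b t x * G x)"
proof -
  have cG: "continuous_on {-pi..pi} G"
    using dG by (meson DERIV_continuous continuous_on_eq_continuous_within)
  have "((\<lambda>x. b t x * G x + Bi t x * G' x) has_integral (Bi t pi * G pi - Bi t (-pi) * G (-pi))) {-pi..pi}"
    apply (rule fundamental_theorem_of_calculus)
     apply simp
    apply (simp only: has_real_derivative_iff_has_vector_derivative[symmetric])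
    apply (rule derivative_eq_intros Bi_deriv[OF t] dG | assumption | simp)+
    done
  then have "integral {-pi..pi} (\<lambda>x. b t x * G x + Bi t x * G' x) = 0"
    using Bi_ends[OF t] by (simp add: integral_unique)
  moreover have "integral {-pi..pi} (\<lambda>x. b t x * G x + Bi t x * G' x) =
     integral {-pi..pi} (\<lambda>x. b t x * G x) + integral {-pi..pi} (\<lambda>x. G' x * Bi t x)"
    apply (subst integral_add)
    using cb_x[OF t] cG cG' Bi_cont[OF t]
    by (auto intro!: integrable_continuous_interval continuous_intros simp: mult.commute)
  ultimately show ?thesis by linarith
qed

lemma core_deriv:
  assumes t1: "0 \<le> t1" "t1 < T" and t: "t \<in> {0..t1}"
  and dP: "\<And>s. (P has_real_derivative P' s) (at s)" and cP': "continuous_on UNIV P'"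
  and dA: "\<And>t. t\<in>{0..t1} \<Longrightarrow> (A has_real_derivative A' t) (at t within {0..t1})" and cA': "continuous_on {0..t1} A'"
  and dW: "\<And>t. t\<in>{0..t1} \<Longrightarrow> (W has_real_derivative W' t) (at t within {0..t1})" and cW': "continuous_on {0..t1} W'"
  shows "((\<lambda>s. integral {-pi..pi} (\<lambda>x. P (A s * (b s x - W s)))) has_real_derivative
     integral {-pi..pi} (\<lambda>x. P' (A t * (b t x - W t)) * (A' t * (b t x - W t) + A t * (bt t x - W' t))))
     (at t within {0..t1})"
proof -
  have sub: "{0..t1} \<subseteq> {0..<T}" using t1 by auto
  have subp: "{0..t1} \<times> {-pi..pi} \<subseteq> {0..<T} \<times> {-pi..pi}" using sub by auto
  have cA: "continuous_on {0..t1} A" using dA by (meson DERIV_continuous continuous_on_eq_continuous_within)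
  have cW: "continuous_on {0..t1} W" using dW by (meson DERIV_continuous continuous_on_eq_continuous_within)
  have cP: "continuous_on UNIV P" using dP by (meson DERIV_continuous continuous_on_eq_continuous_within)
  let ?S = "{0..t1} \<times> {-pi..pi}"
  have c1: "continuous_on ?S (\<lambda>z. A (fst z))" "continuous_on ?S (\<lambda>z. A' (fst z))"
    "continuous_on ?S (\<lambda>z. W (fst z))" "continuous_on ?S (\<lambda>z. W' (fst z))"
    using cA cA' cW cW' by (auto intro: cfst)
  have c2: "continuous_on ?S (\<lambda>z. b (fst z) (snd z))" "continuous_on ?S (\<lambda>z. bt (fst z) (snd z))"
    using continuous_on_subset[OF cb' subp] continuous_on_subset[OF cbt' subp] by auto
  have cfx: "continuous_on ?S (\<lambda>z. P' (A (fst z) * (b (fst z) (snd z) - W (fst z))) *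
        (A' (fst z) * (b (fst z) (snd z) - W (fst z)) + A (fst z) * (bt (fst z) (snd z) - W' (fst z))))"
    by (intro continuous_intros continuous_on_compose2[OF cP', of _ "\<lambda>z. A (fst z) * (b (fst z) (snd z) - W (fst z))"] c1 c2) auto
  have L: "((\<lambda>s. integral (cbox (-pi) pi) (\<lambda>x. P (A s * (b s x - W s)))) has_real_derivative
     integral (cbox (-pi) pi) (\<lambda>x. P' (A t * (b t x - W t)) * (A' t * (b t x - W t) + A t * (bt t x - W' t))))
     (at t within {0..t1})"
  proof (rule leibniz_rule_field_derivative[where fx = "\<lambda>s x. P' (A s * (b s x - W s)) * (A' s * (b s x - W s) + A s * (bt s x - W' s))"])
    fix s x assume s: "s \<in> {0..t1}" and x: "x \<in> cbox (-pi) pi"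
    have x': "x \<in> {-pi..pi}" using x by simp
    have db: "((\<lambda>s. b s x) has_real_derivative bt s x) (at s within {0..t1})"
      using DERIV_subset[OF dt[of s x] sub] s x' sub by auto
    show "((\<lambda>s. P (A s * (b s x - W s))) has_real_derivative P' (A s * (b s x - W s)) * (A' s * (b s x - W s) + A s * (bt s x - W' s))) (at s within {0..t1})"
      by (rule derivative_eq_intros DERIV_chain2[OF dP] dA[OF s] dW[OF s] db | simp)+
  next
    fix s assume s: "s \<in> {0..t1}"
    have "continuous_on {-pi..pi} (\<lambda>x. P (A s * (b s x - W s)))"
      using cb_x[of s] s sub by (intro continuous_intros continuous_on_compose2[OF cP, of _ "\<lambda>x. A s * (b s x - W s)"]) auto
    then show "(\<lambda>x. P (A s * (b s x - W s))) integrable_on cbox (-pi) pi"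
      by (simp add: integrable_continuous_interval)
  next
    show "continuous_on ({0..t1} \<times> cbox (- pi) pi) (\<lambda>(s, x). P' (A s * (b s x - W s)) * (A' s * (b s x - W s) + A s * (bt s x - W' s)))"
      using cfx by (simp add: case_prod_beta')
  qed (use t in auto)
  then show ?thesis by simp
qed

lemma cbt_x: "t \<in> {0..<T} \<Longrightarrow> continuous_on {-pi..pi} (bt t)" by (rule cslice[OF cbt'])

lemma core:
  assumes t1: "0 \<le> t1" "t1 < T" and t: "t \<in> {0..t1}"
  and dP: "\<And>s. (P has_real_derivative P' s) (at s)" and cP': "continuous_on UNIV P'"
  and dA: "\<And>t. t\<in>{0..t1} \<Longrightarrow> (A has_real_derivative A' t) (at t within {0..t1})" and cA': "continuous_on {0..t1} A'"
  and dW: "\<And>t. t\<in>{0..t1} \<Longrightarrow> (W has_real_derivative W' t) (at t within {0..t1})" and cW': "continuous_on {0..t1} W'"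
  shows "((\<lambda>s. integral {-pi..pi} (\<lambda>x. P (A s * (b s x - W s)))) has_real_derivative
     integral {-pi..pi} (\<lambda>x. b t x * P (A t * (b t x - W t)) + P' (A t * (b t x - W t)) * (A' t * (b t x - W t) + A t * (R t (b t x) - W' t))))
     (at t within {0..t1})"
proof -
  have t': "t \<in> {0..<T}" using t t1 by auto
  have cP: "continuous_on UNIV P" using dP by (meson DERIV_continuous continuous_on_eq_continuous_within)
  have cbt: "continuous_on {-pi..pi} (bt t)" "continuous_on {-pi..pi} (b t)" "continuous_on {-pi..pi} (bx t)"
    using cbt_x[OF t'] cb_x[OF t'] cbx_x[OF t'] by auto
  have cP'': "continuous_on {-pi..pi} (\<lambda>x. P' (A t * (b t x - W t)))"
    using cbt by (intro continuous_intros continuous_on_compose2[OF cP', of _ "\<lambda>x. A t * (b t x - W t)"]) auto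
  have cPP: "continuous_on {-pi..pi} (\<lambda>x. P (A t * (b t x - W t)))"
    using cbt by (intro continuous_intros continuous_on_compose2[OF cP, of _ "\<lambda>x. A t * (b t x - W t)"]) auto
  have cR: "continuous_on {-pi..pi} (\<lambda>x. R t (b t x))"
    unfolding R_def using cbt by (intro continuous_intros) auto
  let ?G = "\<lambda>x. P (A t * (b t x - W t))"
  let ?G' = "\<lambda>x. P' (A t * (b t x - W t)) * (A t * bx t x)"
  have dG: "(?G has_real_derivative ?G' x) (at x within {-pi..pi})" if x: "x \<in> {-pi..pi}" for x
    by (rule derivative_eq_intros DERIV_chain2[OF dP] dx[OF t' x] | simp)+
  have I: "integral {-pi..pi} (\<lambda>x. ?G' x * Bi t x) = - integral {-pi..pi} (\<lambda>x. b t x * ?G x)"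
    by (rule ibp[OF t' dG]) (use cP'' cbt in \<open>auto intro!: continuous_intros\<close>)
  have eqi: "integral {-pi..pi} (\<lambda>x. P' (A t * (b t x - W t)) * (A' t * (b t x - W t) + A t * (bt t x - W' t)))
    = integral {-pi..pi} (\<lambda>x. P' (A t * (b t x - W t)) * (A' t * (b t x - W t) + A t * (R t (b t x) - W' t)) - ?G' x * Bi t x)"
  proof (rule integral_cong)
    fix x assume x: "x \<in> {-pi..pi}"
    show "P' (A t * (b t x - W t)) * (A' t * (b t x - W t) + A t * (bt t x - W' t)) =
      P' (A t * (b t x - W t)) * (A' t * (b t x - W t) + A t * (R t (b t x) - W' t)) - ?G' x * Bi t x"
      unfolding bt_eq[OF t' x] by (simp add: algebra_simps)
  qed
  also have "\<dots> = integral {-pi..pi} (\<lambda>x. P' (A t * (b t x - W t)) * (A' t * (b t x - W t) + A t * (R t (b t x) - W' t)))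
      - integral {-pi..pi} (\<lambda>x. ?G' x * Bi t x)"
    by (rule integral_diff) (use cP'' cbt cR Bi_cont[OF t'] in \<open>auto intro!: integrable_continuous_interval continuous_intros\<close>)
  also have "\<dots> = integral {-pi..pi} (\<lambda>x. b t x * ?G x + P' (A t * (b t x - W t)) * (A' t * (b t x - W t) + A t * (R t (b t x) - W' t)))"
    unfolding I
    by (subst integral_add) (use cP'' cbt cR cPP in \<open>auto intro!: integrable_continuous_interval continuous_intros\<close>)
  finally show ?thesis using core_deriv[OF t1 t dP cP' dA cA' dW cW'] by simp
qed

end

lemma deriv_glue:
  fixes f g h :: "real \<Rightarrow> real"
  assumes g: "(g has_real_derivative D) (at x)" and h: "(h has_real_derivative D) (at x)" and d: "d > 0"
   and fg: "\<And>y. y \<le> x \<Longrightarrow> x - d < y \<Longrightarrow> f y = g y" and fh: "\<And>y. x \<le> y \<Longrightarrow> y < x + d \<Longrightarrow> f y = h y"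
  shows "(f has_real_derivative D) (at x)"
proof -
  have 1: "(f has_real_derivative D) (at x within {..x})"
    by (rule has_field_derivative_transform_within[OF has_field_derivative_at_within[OF g] d])
       (auto simp: dist_real_def fg)
  have 2: "(f has_real_derivative D) (at x within {x..})"
    by (rule has_field_derivative_transform_within[OF has_field_derivative_at_within[OF h] d])
       (auto simp: dist_real_def fh)
  have "(f has_real_derivative D) (at x within ({..x} \<union> {x..}))"
    using 1 2 unfolding has_field_derivative_iff Lim_within_Un by auto
  moreover have "{..x} \<union> {x..} = UNIV" by auto
  ultimately show ?thesis by simp
qed

definition clampf :: "real \<Rightarrow> real" where "clampf s = max (-1) (min 0 s)"
definition stp :: "real \<Rightarrow> real" where "stp s = (1 - (clampf s)\<^sup>2)\<^sup>2"
definition stp' :: "real \<Rightarrow> real" where "stp' s = -4 * clampf s * (1 - (clampf s)\<^sup>2)"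

lemma clampf_cont: "continuous_on UNIV clampf"
  unfolding clampf_def by (intro continuous_intros)

lemma stp'_cont: "continuous_on UNIV stp'"
  unfolding stp'_def using clampf_cont by (intro continuous_intros) auto

lemma stp_deriv: "(stp has_real_derivative stp' s) (at s)"
proof -
  have pd: "((\<lambda>y. (1 - y\<^sup>2)\<^sup>2) has_real_derivative -4 * s * (1 - s\<^sup>2)) (at s)" for s :: real
    by (rule derivative_eq_intros | simp)+
  consider "s < -1" | "s = -1" | "-1 < s \<and> s < 0" | "s = 0" | "s > 0" by linarith
  then show ?thesis
  proof cases
    case 1
    have "(stp has_real_derivative 0) (at s)"
      by (rule has_field_derivative_transform_within_open[OF DERIV_const[of 0], where S="{..< -1}"])
         (use 1 in \<open>auto simp: stp_def clampf_def\<close>)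
    then show ?thesis using 1 by (simp add: stp'_def clampf_def)
  next
    case 2
    have h: "((\<lambda>y. (1 - y\<^sup>2)\<^sup>2) has_real_derivative 0) (at s)" using pd[of s] 2 by simp
    have "(stp has_real_derivative 0) (at s)"
      by (rule deriv_glue[OF DERIV_const[of 0] h, where d=1]) (use 2 in \<open>auto simp: stp_def clampf_def\<close>)
    then show ?thesis using 2 by (simp add: stp'_def clampf_def)
  next
    case 3
    have "(stp has_real_derivative -4 * s * (1 - s\<^sup>2)) (at s)"
      by (rule has_field_derivative_transform_within_open[OF pd, where S="{-1<..<0}"])
         (use 3 in \<open>auto simp: stp_def clampf_def\<close>)
    then show ?thesis using 3 by (simp add: stp'_def clampf_def)
  next
    case 4
    have h: "((\<lambda>y. (1 - y\<^sup>2)\<^sup>2) has_real_derivative 0) (at s)" using pd[of s] 4 by simp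
    have "(stp has_real_derivative 0) (at s)"
      by (rule deriv_glue[OF h DERIV_const[of 1], where d=1]) (use 4 in \<open>auto simp: stp_def clampf_def\<close>)
    then show ?thesis using 4 by (simp add: stp'_def clampf_def)
  next
    case 5
    have "(stp has_real_derivative 0) (at s)"
      by (rule has_field_derivative_transform_within_open[OF DERIV_const[of 1], where S="{0<..}"])
         (use 5 in \<open>auto simp: stp_def clampf_def\<close>)
    then show ?thesis using 5 by (simp add: stp'_def clampf_def)
  qed
qed

lemma stp_nonneg: "0 \<le> stp s" unfolding stp_def by simp
lemma clampf_sq: "(clampf s)\<^sup>2 \<le> 1"
  unfolding abs_square_le_1 clampf_def by auto
lemma stp_le1: "stp s \<le> 1"
proof -
  have "0 \<le> 1 - (clampf s)\<^sup>2" "1 - (clampf s)\<^sup>2 \<le> 1" using clampf_sq[of s] by auto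
  then show ?thesis unfolding stp_def by (simp add: power_le_one)
qed
lemma stp_0: "stp 0 = 1" unfolding stp_def clampf_def by simp
lemma stp_pos: "stp s \<noteq> 0 \<Longrightarrow> s > -1"
  unfolding stp_def clampf_def by (cases "s \<le> -1") auto
lemma stp'_sign: "s * stp' s \<le> 0"
proof -
  have "0 \<le> 1 - (clampf s)\<^sup>2" using clampf_sq[of s] by auto
  moreover have "s * clampf s \<ge> 0" unfolding clampf_def by (auto simp: max_def min_def zero_le_mult_iff)
  moreover have "s * stp' s = -4 * ((s * clampf s) * (1 - (clampf s)\<^sup>2))" unfolding stp'_def by (simp add: algebra_simps)
  ultimately show ?thesis by (simp add: mult_nonneg_nonneg)
qed

definition sqp :: "real \<Rightarrow> real" where "sqp s = (max s 0)\<^sup>2"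
definition sqp' :: "real \<Rightarrow> real" where "sqp' s = 2 * max s 0"

lemma sqp'_cont: "continuous_on UNIV sqp'"
  unfolding sqp'_def by (intro continuous_intros)

lemma sqp_deriv: "(sqp has_real_derivative sqp' s) (at s)"
proof -
  have pd: "((\<lambda>y. y\<^sup>2) has_real_derivative 2 * s) (at s)" for s :: real
    by (rule derivative_eq_intros | simp)+
  consider "s < 0" | "s = 0" | "s > 0" by linarith
  then show ?thesis
  proof cases
    case 1
    have "(sqp has_real_derivative 0) (at s)"
      by (rule has_field_derivative_transform_within_open[OF DERIV_const[of 0], where S="{..< 0}"])
         (use 1 in \<open>auto simp: sqp_def\<close>)
    then show ?thesis using 1 by (simp add: sqp'_def)
  next
    case 2
    have h: "((\<lambda>y. y\<^sup>2) has_real_derivative 0) (at s)" using pd[of s] 2 by simp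
    have "(sqp has_real_derivative 0) (at s)"
      by (rule deriv_glue[OF DERIV_const[of 0] h, where d=1]) (use 2 in \<open>auto simp: sqp_def\<close>)
    then show ?thesis using 2 by (simp add: sqp'_def)
  next
    case 3
    have "(sqp has_real_derivative 2 * s) (at s)"
      by (rule has_field_derivative_transform_within_open[OF pd, where S="{0<..}"])
         (use 3 in \<open>auto simp: sqp_def\<close>)
    then show ?thesis using 3 by (simp add: sqp'_def)
  qed
qed

lemma sqp_nonneg: "0 \<le> sqp s" unfolding sqp_def by simp
lemma sqp'_mult: "sqp' s * s = 2 * sqp s" unfolding sqp_def sqp'_def by (auto simp: max_def power2_eq_square)

lemma ode_ineq:
  fixes Psi Psi' G g :: "real \<Rightarrow> real"
  assumes t1: "0 \<le> t1"
  and dPsi: "\<And>t. t \<in> {0..t1} \<Longrightarrow> (Psi has_real_derivative Psi' t) (at t within {0..t1})"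
  and dG: "\<And>t. t \<in> {0..t1} \<Longrightarrow> (G has_real_derivative g t) (at t within {0..t1})"
  and ineq: "\<And>t. t \<in> {0..t1} \<Longrightarrow> g t * Psi t \<le> Psi' t"
  shows "Psi 0 * exp (- G 0) \<le> Psi t1 * exp (- G t1)"
proof -
  let ?F = "\<lambda>t. Psi t * exp (- G t)"
  have dF: "(?F has_real_derivative (Psi' t - g t * Psi t) * exp (- G t)) (at t within {0..t1})" if t: "t \<in> {0..t1}" for t
    by (rule derivative_eq_intros dPsi[OF t] dG[OF t] | simp)+ (simp add: algebra_simps)
  show ?thesis
  proof (rule DERIV_nonneg_imp_increasing_open[OF t1])
    fix x assume x: "0 < x" "x < t1"
    have "(?F has_real_derivative (Psi' x - g x * Psi x) * exp (- G x)) (at x)"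
      using dF[of x] x at_within_Icc_at[of 0 x t1] by auto
    moreover have "(Psi' x - g x * Psi x) * exp (- G x) \<ge> 0" using ineq[of x] x by auto
    ultimately show "\<exists>y. (?F has_real_derivative y) (at x) \<and> 0 \<le> y" by blast
  next
    show "continuous_on {0..t1} ?F"
      using dF by (meson DERIV_continuous continuous_on_eq_continuous_within)
  qed
qed

lemma cont_bound:
  fixes f :: "'a::topological_space \<Rightarrow> real"
  assumes "compact S" "continuous_on S f"
  shows "\<exists>K. \<forall>z\<in>S. \<bar>f z\<bar> \<le> K"
proof -
  have "bounded (f ` S)" using compact_imp_bounded[OF compact_continuous_image[OF assms(2,1)]] .
  then obtain K where "\<forall>y\<in>f ` S. norm y \<le> K" by (auto simp: bounded_iff)
  then show ?thesis by auto
qed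

lemma log_div:
  fixes W :: "real \<Rightarrow> real"
  assumes t2: "t2 < tau" and c: "c > 0"
  and cW: "\<And>t1. t1 \<in> {t2..<tau} \<Longrightarrow> continuous_on {t2..t1} W"
  and lb: "\<And>s. s \<in> {t2..<tau} \<Longrightarrow> c / (tau - s) - K \<le> W s"
  shows "\<exists>t1\<in>{t2..<tau}. integral {t2..t1} W > L"
proof -
  define M where "M = (\<bar>L\<bar> + \<bar>K\<bar> * (tau - t2) + 1) / c"
  define t1 where "t1 = tau - (tau - t2) * exp (- M)"
  have M: "M > 0" unfolding M_def using c t2 by (auto intro!: divide_pos_pos add_nonneg_pos)
  have e: "exp (- M) < 1" "exp (-M) > 0" using M by auto
  have t1r: "t2 < t1" "t1 < tau"
  proof -
    have "(tau - t2) * exp (- M) < (tau - t2) * 1" using t2 e by (intro mult_strict_left_mono) auto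
    moreover have "(tau - t2) * exp (- M) > 0" using t2 e by auto
    ultimately show "t2 < t1" "t1 < tau" unfolding t1_def by auto
  qed
  have ant: "((\<lambda>s. - c * ln (tau - s) - K * s) has_real_derivative c / (tau - s) - K) (at s within {t2..t1})"
    if s: "s \<in> {t2..t1}" for s
    using s t1r by (auto intro!: derivative_eq_intros simp: field_simps)
  have hi: "((\<lambda>s. c / (tau - s) - K) has_integral ((- c * ln (tau - t1) - K * t1) - (- c * ln (tau - t2) - K * t2))) {t2..t1}"
    by (rule fundamental_theorem_of_calculus) (use t1r ant in \<open>auto simp: has_real_derivative_iff_has_vector_derivative[symmetric]\<close>)
  have "integral {t2..t1} (\<lambda>s. c / (tau - s) - K) \<le> integral {t2..t1} W"
    apply (rule integral_le)
    using hi apply blast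
    using cW[of t1] t1r apply (auto intro: integrable_continuous_interval)[1]
    using lb t1r by auto
  moreover have "integral {t2..t1} (\<lambda>s. c / (tau - s) - K) = c * (ln (tau - t2) - ln (tau - t1)) - K * (t1 - t2)"
    using integral_unique[OF hi] by (simp add: algebra_simps)
  moreover have "c * (ln (tau - t2) - ln (tau - t1)) = \<bar>L\<bar> + \<bar>K\<bar> * (tau - t2) + 1"
  proof -
    have "ln (tau - t1) = ln (tau - t2) - M"
      unfolding t1_def using t2 by (simp add: ln_mult)
    then show ?thesis unfolding M_def using c by simp
  qed
  moreover have "K * (t1 - t2) \<le> \<bar>K\<bar> * (tau - t2)"
  proof -
    have "K * (t1 - t2) \<le> \<bar>K\<bar> * (t1 - t2)" using t1r by (intro mult_right_mono) auto
    also have "\<dots> \<le> \<bar>K\<bar> * (tau - t2)" using t1r by (intro mult_left_mono) auto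
    finally show ?thesis .
  qed
  ultimately have "integral {t2..t1} W > L" using abs_ge_self[of L] by linarith
  then show ?thesis using t1r by auto
qed

lemma stp_cont: "continuous_on UNIV stp"
  using stp_deriv by (meson DERIV_continuous continuous_on_eq_continuous_within)
lemma sqp_cont: "continuous_on UNIV sqp"
  using sqp_deriv by (meson DERIV_continuous continuous_on_eq_continuous_within)

lemma deriv_cont: "(\<And>t. t \<in> S \<Longrightarrow> (f has_real_derivative f' t) (at t within S)) \<Longrightarrow> continuous_on S f"
  by (meson DERIV_continuous continuous_on_eq_continuous_within)

context sol begin

definition "u t = b t (-pi)"
definition "Aa t = integral {0..t} (\<lambda>s. 2 * u s + p s)"
definition "Qf t = integral {0..t} (\<lambda>s. exp (Aa s))"
definition "psi c t = exp (- Aa t) * (c - Qf t)"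
definition "Wf c t = u t + 1 / psi c t"

lemma E_cont: assumes t1: "0 \<le> t1" "t1 < T" shows "continuous_on {0..t1} E"
proof (rule deriv_cont)
  fix t assume t: "t \<in> {0..t1}"
  have "((\<lambda>s. integral {-pi..pi} (\<lambda>x. (1 * (b s x - 0))\<^sup>2)) has_real_derivative
     integral {-pi..pi} (\<lambda>x. 2 * (1 * (b t x - 0)) * (0 * (b t x - 0) + 1 * (bt t x - 0)))) (at t within {0..t1})"
  proof (rule core_deriv[OF t1 t, where P="\<lambda>s. s\<^sup>2" and P'="\<lambda>s. 2 * s" and A="\<lambda>_. 1" and A'="\<lambda>_. 0" and W="\<lambda>_. 0" and W'="\<lambda>_. 0"])
    show "((\<lambda>s. s\<^sup>2) has_real_derivative 2 * s) (at s)" for s :: real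
      by (rule derivative_eq_intros | simp)+
    show "continuous_on UNIV (\<lambda>s::real. 2 * s)" by (intro continuous_intros)
  qed auto
  then show "(E has_real_derivative integral {-pi..pi} (\<lambda>x. 2 * (1 * (b t x - 0)) * (0 * (b t x - 0) + 1 * (bt t x - 0)))) (at t within {0..t1})"
    by (simp add: E_def[abs_def])
qed

lemma p_deriv: assumes t1: "0 \<le> t1" "t1 < T" and t: "t \<in> {0..t1}"
  shows "(p has_real_derivative E t / pi) (at t within {0..t1})"
  unfolding p_def[abs_def]
  by (rule DERIV_cdivide integral_has_real_derivative[OF E_cont[OF t1] t])+

lemma p_cont: assumes "0 \<le> t1" "t1 < T" shows "continuous_on {0..t1} p"
  by (rule deriv_cont[OF p_deriv[OF assms]])

lemma u_deriv: assumes t1: "0 \<le> t1" "t1 < T" and t: "t \<in> {0..t1}"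
  shows "(u has_real_derivative R t (u t)) (at t within {0..t1})"
proof -
  have t': "t \<in> {0..<T}" using t t1 by auto
  have "bt t (-pi) = R t (u t)" using bt_eq[OF t', of "-pi"] Bi_ends[OF t'] by (simp add: u_def)
  moreover have "((\<lambda>s. b s (-pi)) has_real_derivative bt t (-pi)) (at t within {0..t1})"
    by (rule DERIV_subset[OF dt[OF t']]) (use t1 in auto)
  ultimately show ?thesis by (simp add: u_def[abs_def])
qed

lemma u_cont: assumes "0 \<le> t1" "t1 < T" shows "continuous_on {0..t1} u"
  by (rule deriv_cont[OF u_deriv[OF assms]])

lemma Aa_deriv: assumes t1: "0 \<le> t1" "t1 < T" and t: "t \<in> {0..t1}"
  shows "(Aa has_real_derivative 2 * u t + p t) (at t within {0..t1})"
proof -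
  have "continuous_on {0..t1} (\<lambda>s. 2 * u s + p s)" using u_cont[OF t1] p_cont[OF t1] by (intro continuous_intros)
  then show ?thesis unfolding Aa_def[abs_def] by (rule integral_has_real_derivative[OF _ t])
qed

lemma Aa_cont: assumes "0 \<le> t1" "t1 < T" shows "continuous_on {0..t1} Aa"
  by (rule deriv_cont[OF Aa_deriv[OF assms]])

lemma Qf_deriv: assumes t1: "0 \<le> t1" "t1 < T" and t: "t \<in> {0..t1}"
  shows "(Qf has_real_derivative exp (Aa t)) (at t within {0..t1})"
proof -
  have "continuous_on {0..t1} (\<lambda>s. exp (Aa s))" using Aa_cont[OF t1] by (intro continuous_intros)
  then show ?thesis unfolding Qf_def[abs_def] by (rule integral_has_real_derivative[OF _ t])
qed

lemma psi_deriv: assumes t1: "0 \<le> t1" "t1 < T" and t: "t \<in> {0..t1}"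
  shows "(psi c has_real_derivative - (2 * u t + p t) * psi c t - 1) (at t within {0..t1})"
  unfolding psi_def[abs_def]
  by (rule derivative_eq_intros Aa_deriv[OF t1 t] Qf_deriv[OF t1 t] | simp)+
     (simp add: algebra_simps exp_minus field_simps)

lemma psi_cont: assumes "0 \<le> t1" "t1 < T" shows "continuous_on {0..t1} (psi c)"
  by (rule deriv_cont[OF psi_deriv[OF assms]])

lemma psi_0: "psi c 0 = c" by (simp add: psi_def Aa_def Qf_def)
lemma Wf_0: "Wf c 0 = b 0 (-pi) + 1 / c" by (simp add: Wf_def psi_0 u_def)

lemma W_deriv: assumes t1: "0 \<le> t1" "t1 < T" and t: "t \<in> {0..t1}" and nz: "psi c t \<noteq> 0"
  shows "(Wf c has_real_derivative R t (Wf c t)) (at t within {0..t1})"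
proof -
  have "(Wf c has_real_derivative R t (u t) - (- (2 * u t + p t) * psi c t - 1) / (psi c t)\<^sup>2) (at t within {0..t1})"
    unfolding Wf_def[abs_def]
    by (rule derivative_eq_intros u_deriv[OF t1 t] psi_deriv[OF t1 t] | simp add: nz)+
       (use nz in \<open>simp add: power2_eq_square field_simps\<close>)
  moreover have "R t (u t) - (- (2 * u t + p t) * psi c t - 1) / (psi c t)\<^sup>2 = R t (Wf c t)"
    unfolding R_def Wf_def using nz by (simp add: field_simps power2_eq_square)
  ultimately show ?thesis by simp
qed

lemma R_cont: assumes "0 \<le> t1" "t1 < T" "continuous_on {0..t1} W"
  shows "continuous_on {0..t1} (\<lambda>t. R t (W t))"
  unfolding R_def using assms p_cont E_cont by (intro continuous_intros) auto

lemma compare: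
  assumes t1: "0 \<le> t1" "t1 < T"
  and dW: "\<And>t. t \<in> {0..t1} \<Longrightarrow> (W has_real_derivative R t (W t)) (at t within {0..t1})"
  and init: "\<And>x. x \<in> {-pi..pi} \<Longrightarrow> b 0 x \<le> W 0"
  and x: "x \<in> {-pi..pi}"
  shows "b t1 x \<le> W t1"
proof -
  have cW: "continuous_on {0..t1} W" by (rule deriv_cont[OF dW])
  have cW': "continuous_on {0..t1} (\<lambda>t. R t (W t))" using R_cont[OF t1 cW] .
  have sub: "{0..t1} \<subseteq> {0..<T}" using t1 by auto
  let ?S = "{0..t1} \<times> {-pi..pi}"
  have "continuous_on ?S (\<lambda>z. 3 * b (fst z) (snd z) + 2 * W (fst z) + 2 * p (fst z))"
    using continuous_on_subset[OF cb', of ?S] sub cfst[OF cW] cfst[OF p_cont[OF t1]]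
    by (intro continuous_intros) auto
  moreover have cS: "compact ?S" by (intro compact_Times compact_Icc)
  ultimately obtain K where K: "\<And>z. z \<in> ?S \<Longrightarrow> \<bar>3 * b (fst z) (snd z) + 2 * W (fst z) + 2 * p (fst z)\<bar> \<le> K"
    using cont_bound[of ?S] by blast
  define Psi where "Psi t = integral {-pi..pi} (\<lambda>x. sqp (1 * (b t x - W t)))" for t
  define Psi' where "Psi' t = integral {-pi..pi} (\<lambda>x. b t x * sqp (1 * (b t x - W t)) +
     sqp' (1 * (b t x - W t)) * (0 * (b t x - W t) + 1 * (R t (b t x) - R t (W t))))" for t
  have dPsi: "(Psi has_real_derivative Psi' t) (at t within {0..t1})" if t: "t \<in> {0..t1}" for t
    unfolding Psi_def[abs_def] Psi'_def
    by (rule core[OF t1 t sqp_deriv sqp'_cont _ _ dW cW', where A="\<lambda>_. 1" and A'="\<lambda>_. 0"]) auto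
  have cx: "continuous_on {-pi..pi} (b t)" if "t \<in> {0..t1}" for t using cb_x[of t] that sub by auto
  have ineq: "Psi' t \<le> K * Psi t" if t: "t \<in> {0..t1}" for t
  proof -
    have "Psi' t \<le> integral {-pi..pi} (\<lambda>x. K * sqp (1 * (b t x - W t)))"
      unfolding Psi'_def
    proof (rule integral_le)
      fix x assume x: "x \<in> {-pi..pi}"
      have "R t (b t x) - R t (W t) = (b t x - W t) * (b t x + W t + p t)"
        unfolding R_def by (simp add: algebra_simps power2_eq_square)
      then have "sqp' (1 * (b t x - W t)) * (0 * (b t x - W t) + 1 * (R t (b t x) - R t (W t)))
          = (sqp' (b t x - W t) * (b t x - W t)) * (b t x + W t + p t)"
        by (simp add: ac_simps)
      also have "\<dots> = 2 * sqp (b t x - W t) * (b t x + W t + p t)" unfolding sqp'_mult ..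
      finally have "b t x * sqp (1 * (b t x - W t)) + sqp' (1 * (b t x - W t)) * (0 * (b t x - W t) + 1 * (R t (b t x) - R t (W t)))
         = sqp (b t x - W t) * (3 * b t x + 2 * W t + 2 * p t)"
        by (simp add: algebra_simps)
      also have "\<dots> \<le> sqp (b t x - W t) * K"
        using K[of "(t,x)"] t x sqp_nonneg by (intro mult_left_mono) auto
      finally show "b t x * sqp (1 * (b t x - W t)) + sqp' (1 * (b t x - W t)) * (0 * (b t x - W t) + 1 * (R t (b t x) - R t (W t)))
         \<le> K * sqp (1 * (b t x - W t))" by (simp add: mult.commute)
    next
      show "(\<lambda>x. K * sqp (1 * (b t x - W t))) integrable_on {-pi..pi}"
        using cx[OF t] by (intro integrable_continuous_interval continuous_intros continuous_on_compose2[OF sqp_cont]) auto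
      have "continuous_on {-pi..pi} (\<lambda>x. R t (b t x))" unfolding R_def using cx[OF t] by (intro continuous_intros)
      then show "(\<lambda>x. b t x * sqp (1 * (b t x - W t)) + sqp' (1 * (b t x - W t)) * (0 * (b t x - W t) + 1 * (R t (b t x) - R t (W t)))) integrable_on {-pi..pi}"
        using cx[OF t] by (intro integrable_continuous_interval continuous_intros continuous_on_compose2[OF sqp_cont] continuous_on_compose2[OF sqp'_cont]) auto
    qed
    also have "\<dots> = K * Psi t" unfolding Psi_def by simp
    finally show ?thesis .
  qed
  have "(- Psi 0) * exp (- (K * 0)) \<le> (- Psi t1) * exp (- (K * t1))"
  proof (rule ode_ineq[OF t1(1), where Psi="\<lambda>t. - Psi t" and Psi' = "\<lambda>t. - Psi' t" and G="\<lambda>t. K * t" and g = "\<lambda>_. K"])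
    fix t assume t: "t \<in> {0..t1}"
    show "((\<lambda>t. - Psi t) has_real_derivative - Psi' t) (at t within {0..t1})" by (rule DERIV_minus[OF dPsi[OF t]])
    show "((\<lambda>t. K * t) has_real_derivative K) (at t within {0..t1})" by (rule derivative_eq_intros | simp)+
    show "K * - Psi t \<le> - Psi' t" using ineq[OF t] by simp
  qed
  moreover have "Psi 0 = 0"
  proof -
    have "Psi 0 = integral {-pi..pi} (\<lambda>x. 0)"
      unfolding Psi_def by (rule integral_cong) (use init in \<open>auto simp: sqp_def\<close>)
    then show ?thesis by simp
  qed
  ultimately have P1: "Psi t1 \<le> 0" by (simp add: mult_le_0_iff)
  have cf: "continuous_on {-pi..pi} (\<lambda>x. sqp (1 * (b t1 x - W t1)))"
    using cx[of t1] t1 by (intro continuous_intros continuous_on_compose2[OF sqp_cont]) auto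
  have "Psi t1 \<ge> 0" unfolding Psi_def by (rule integral_nonneg) (use cf sqp_nonneg in \<open>auto intro: integrable_continuous_interval\<close>)
  with P1 have "Psi t1 = 0" by simp
  then have hi: "((\<lambda>x. sqp (1 * (b t1 x - W t1))) has_integral 0) (cbox (-pi) pi)"
    unfolding Psi_def using cf by (metis cbox_interval has_integral_integral integrable_continuous_interval)
  have "sqp (1 * (b t1 x - W t1)) = 0"
  proof (rule has_integral_0_cbox_imp_0[OF _ _ hi])
    show "box (-pi) pi \<noteq> {}" by (simp add: box_real not_le)
  qed (use cf x sqp_nonneg in \<open>auto simp: cbox_interval\<close>)
  then show ?thesis by (simp add: sqp_def max_def split: if_splits)
qed

end

context sol begin

lemma plateau:
  assumes t1: "0 \<le> t1" "t1 < T"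
  and dW: "\<And>t. t \<in> {0..t1} \<Longrightarrow> (W has_real_derivative R t (W t)) (at t within {0..t1})"
  and a: "0 < a" "a \<le> pi"
  and plat: "\<And>x. x \<in> {-a..a} \<Longrightarrow> b 0 x = W 0"
  shows "integral {0..t1} W \<le> ln (pi / a)"
proof -
  have cW: "continuous_on {0..t1} W" by (rule deriv_cont[OF dW])
  have cW': "continuous_on {0..t1} (\<lambda>t. R t (W t))" using R_cont[OF t1 cW] .
  have sub: "{0..t1} \<subseteq> {0..<T}" using t1 by auto
  have cx: "continuous_on {-pi..pi} (b t)" if "t \<in> {0..t1}" for t using cb_x[of t] that sub by auto
  let ?S = "{0..t1} \<times> {-pi..pi}"
  have "continuous_on ?S (\<lambda>z. b (fst z) (snd z) + W (fst z) + p (fst z))"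
    using continuous_on_subset[OF cb', of ?S] sub cfst[OF cW] cfst[OF p_cont[OF t1]]
    by (intro continuous_intros) auto
  moreover have cS: "compact ?S" by (intro compact_Times compact_Icc)
  ultimately obtain C where C: "\<And>z. z \<in> ?S \<Longrightarrow> \<bar>b (fst z) (snd z) + W (fst z) + p (fst z)\<bar> \<le> C"
    using cont_bound[of ?S] by blast
  have C0: "C \<ge> 0" using C[of "(0, 0)"] t1 by auto
  have key: "integral {0..t1} W - e * t1 \<le> ln (pi / a)" if e: "e > 0" for e
  proof -
    define k0 where "k0 = exp (C * t1) / e"
    have k0: "k0 > 0" unfolding k0_def using e by simp
    define al where "al t = k0 * exp (- (C * t))" for t
    have alpos: "al t > 0" for t unfolding al_def using k0 by simp
    have inval: "1 / al t \<le> e" if t: "t \<in> {0..t1}" for t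
    proof -
      have "1 / al t = exp (C * t) / k0" unfolding al_def by (simp add: exp_minus field_simps)
      also have "\<dots> \<le> exp (C * t1) / k0" using t C0 k0 by (intro divide_right_mono) (auto intro!: mult_left_mono)
      also have "\<dots> = e" unfolding k0_def using e by simp
      finally show ?thesis .
    qed
    have dal: "(al has_real_derivative - C * al t) (at t within {0..t1})" for t
      unfolding al_def[abs_def] by (rule derivative_eq_intros | simp)+
    define Psi where "Psi t = integral {-pi..pi} (\<lambda>x. stp (al t * (b t x - W t)))" for t
    define Psi' where "Psi' t = integral {-pi..pi} (\<lambda>x. b t x * stp (al t * (b t x - W t)) +
     stp' (al t * (b t x - W t)) * (- C * al t * (b t x - W t) + al t * (R t (b t x) - R t (W t))))" for t
    have dPsi: "(Psi has_real_derivative Psi' t) (at t within {0..t1})" if t: "t \<in> {0..t1}" for t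
      unfolding Psi_def[abs_def] Psi'_def
    proof (rule core[OF t1 t stp_deriv stp'_cont dal _ dW cW'])
      show "continuous_on {0..t1} (\<lambda>t. - C * al t)" unfolding al_def by (intro continuous_intros)
    qed
    have ineq: "(W t - e) * Psi t \<le> Psi' t" if t: "t \<in> {0..t1}" for t
    proof -
      have "(W t - e) * Psi t = integral {-pi..pi} (\<lambda>x. (W t - e) * stp (al t * (b t x - W t)))"
        unfolding Psi_def by simp
      also have "\<dots> \<le> Psi' t"
        unfolding Psi'_def
      proof (rule integral_le)
        fix x assume x: "x \<in> {-pi..pi}"
        define z where "z = b t x - W t"
        have t2: "stp' (al t * z) * (- C * al t * z + al t * (R t (b t x) - R t (W t))) \<ge> 0"
        proof -
          have "R t (b t x) - R t (W t) = z * (b t x + W t + p t)"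
            unfolding R_def z_def by (simp add: algebra_simps power2_eq_square)
          then have eq: "- C * al t * z + al t * (R t (b t x) - R t (W t)) = (al t * z) * (b t x + W t + p t - C)"
            by (simp add: algebra_simps)
          have id: "stp' y * (y * w) = (y * stp' y) * w" for y w :: real by (simp add: ac_simps)
          have "(al t * z) * stp' (al t * z) \<le> 0" by (rule stp'_sign)
          moreover have "b t x + W t + p t - C \<le> 0" using C[of "(t,x)"] t x by auto
          ultimately have "0 \<le> ((al t * z) * stp' (al t * z)) * (b t x + W t + p t - C)"
            by (rule mult_nonpos_nonpos)
          then show ?thesis unfolding eq id .
        qed
        have t1': "(W t - e) * stp (al t * z) \<le> b t x * stp (al t * z)"
        proof (cases "stp (al t * z) = 0")
          case False
          then have "al t * z > -1" by (rule stp_pos)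
          then have "z > - 1 / al t" using alpos[of t] by (simp add: field_simps)
          then have "b t x \<ge> W t - e" using inval[OF t] unfolding z_def by linarith
          then show ?thesis using stp_nonneg by (intro mult_right_mono) auto
        qed simp
        show "(W t - e) * stp (al t * (b t x - W t)) \<le> b t x * stp (al t * (b t x - W t)) +
           stp' (al t * (b t x - W t)) * (- C * al t * (b t x - W t) + al t * (R t (b t x) - R t (W t)))"
          using t1' t2 unfolding z_def by linarith
      next
        show "(\<lambda>x. (W t - e) * stp (al t * (b t x - W t))) integrable_on {-pi..pi}"
          using cx[OF t] by (intro integrable_continuous_interval continuous_intros continuous_on_compose2[OF stp_cont]) auto
        have "continuous_on {-pi..pi} (\<lambda>x. R t (b t x))" unfolding R_def using cx[OF t] by (intro continuous_intros)
        then show "(\<lambda>x. b t x * stp (al t * (b t x - W t)) + stp' (al t * (b t x - W t)) * (- C * al t * (b t x - W t) + al t * (R t (b t x) - R t (W t)))) integrable_on {-pi..pi}"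
          using cx[OF t] by (intro integrable_continuous_interval continuous_intros continuous_on_compose2[OF stp_cont] continuous_on_compose2[OF stp'_cont]) auto
      qed
      finally show ?thesis .
    qed
    define G where "G t = integral {0..t} W - e * t" for t
    have dG: "(G has_real_derivative W t - e) (at t within {0..t1})" if t: "t \<in> {0..t1}" for t
      unfolding G_def[abs_def]
      by (rule derivative_eq_intros integral_has_real_derivative[OF cW t] | simp)+
    have main: "Psi 0 * exp (- G 0) \<le> Psi t1 * exp (- G t1)"
      by (rule ode_ineq[OF t1(1) dPsi dG ineq])
    have G0: "G 0 = 0" unfolding G_def by simp
    have cf: "continuous_on {-pi..pi} (\<lambda>x. stp (al t * (b t x - W t)))" if "t \<in> {0..t1}" for t
      using cx[OF that] by (intro continuous_intros continuous_on_compose2[OF stp_cont]) auto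
    have "Psi t1 \<le> integral {-pi..pi} (\<lambda>x. 1)"
      unfolding Psi_def by (rule integral_le) (use cf[of t1] t1 stp_le1 in \<open>auto intro: integrable_continuous_interval\<close>)
    then have Pt1: "Psi t1 \<le> 2 * pi" by simp
    have "integral {-a..a} (\<lambda>x. stp (al 0 * (b 0 x - W 0))) \<le> Psi 0"
      unfolding Psi_def
      by (rule integral_subset_le) (use a cf[of 0] t1 stp_nonneg in \<open>auto intro: integrable_continuous_interval integrable_on_subinterval\<close>)
    moreover have "integral {-a..a} (\<lambda>x. stp (al 0 * (b 0 x - W 0))) = integral {-a..a} (\<lambda>x. 1)"
      by (rule integral_cong) (use plat stp_0 in auto)
    ultimately have P0: "Psi 0 \<ge> 2 * a" using a by simp
    have "2 * a \<le> 2 * pi * exp (- G t1)"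
    proof -
      have "2 * a \<le> Psi t1 * exp (- G t1)" using main P0 G0 by simp
      also have "\<dots> \<le> 2 * pi * exp (- G t1)" using Pt1 by (intro mult_right_mono) auto
      finally show ?thesis .
    qed
    then have "exp (G t1) \<le> pi / a" using a by (simp add: exp_minus field_simps)
    then have "ln (exp (G t1)) \<le> ln (pi / a)" using a by (subst ln_le_cancel_iff) auto
    then have "G t1 \<le> ln (pi / a)" by simp
    then show ?thesis unfolding G_def .
  qed
  show ?thesis
  proof (rule ccontr)
    assume "\<not> ?thesis"
    then have d: "integral {0..t1} W - ln (pi / a) > 0" by simp
    define e where "e = (integral {0..t1} W - ln (pi / a)) / (2 * (t1 + 1))"
    have e: "e > 0" unfolding e_def using d t1 by simp
    have "e * t1 = (integral {0..t1} W - ln (pi / a)) * (t1 / (2 * (t1 + 1)))" unfolding e_def by simp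
    moreover have "t1 / (2 * (t1 + 1)) < 1" using t1 by (simp add: field_simps)
    ultimately have "e * t1 < integral {0..t1} W - ln (pi / a)"
      using d mult_strict_left_mono[of "t1 / (2 * (t1 + 1))" 1 "integral {0..t1} W - ln (pi / a)"] by simp
    with key[OF e] show False by linarith
  qed
qed

end

context sol begin

lemma profile:
  assumes cbu: "cos_blowup T b"
  shows "\<exists>t2\<in>{0..<T}. \<forall>s\<in>{t2..<T}. 1 / (2 * (T - s)) \<le> b s 0"
proof -
  have "eventually (\<lambda>t. (T - t) * (SUP x\<in>{-pi..pi}. \<bar>b t x - cos x / (T - t)\<bar>) < 1/2) (at_left T)"
    using cbu unfolding cos_blowup_def by (rule order_tendstoD(2)) simp
  then obtain b' where b': "b' < T" "\<And>y. b' < y \<Longrightarrow> y < T \<Longrightarrow> (T - y) * (SUP x\<in>{-pi..pi}. \<bar>b y x - cos x / (T - y)\<bar>) < 1/2"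
    unfolding eventually_at_left_field by blast
  define t2 where "t2 = (max 0 b' + T) / 2"
  have t2: "0 \<le> t2" "t2 < T" "b' < t2" using b' Tpos unfolding t2_def by (auto simp: max_def)
  show ?thesis
  proof (intro bexI ballI)
    fix s assume s: "s \<in> {t2..<T}"
    have s': "s \<in> {0..<T}" using s t2 by auto
    define d where "d = T - s"
    have d: "d > 0" using s unfolding d_def by auto
    have cont: "continuous_on {-pi..pi} (\<lambda>x. \<bar>b s x - cos x / (T - s)\<bar>)"
      using cb_x[OF s'] s by (intro continuous_intros) auto
    have bdd: "bdd_above ((\<lambda>x. \<bar>b s x - cos x / (T - s)\<bar>) ` {-pi..pi})"
      by (rule bounded_imp_bdd_above[OF compact_imp_bounded[OF compact_continuous_image[OF cont compact_Icc]]])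
    have "\<bar>b s 0 - cos 0 / (T - s)\<bar> \<le> (SUP x\<in>{-pi..pi}. \<bar>b s x - cos x / (T - s)\<bar>)"
      by (rule cSUP_upper[OF _ bdd]) simp
    then have "d * \<bar>b s 0 - 1 / d\<bar> \<le> d * (SUP x\<in>{-pi..pi}. \<bar>b s x - cos x / (T - s)\<bar>)"
      using d unfolding d_def by (intro mult_left_mono) auto
    also have "\<dots> < 1/2" using b'(2)[of s] s t2 unfolding d_def by auto
    finally have h: "d * \<bar>b s 0 - 1 / d\<bar> < 1/2" .
    have e1: "d * b s 0 - 1 = d * (b s 0 - 1 / d)" using d by (simp add: algebra_simps)
    have e2: "\<bar>d * (b s 0 - 1 / d)\<bar> = d * \<bar>b s 0 - 1 / d\<bar>" using d by (simp add: abs_mult)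
    have "\<bar>d * b s 0 - 1\<bar> < 1/2" unfolding e1 e2 by (rule h)
    then have "d * b s 0 - 1 > - 1/2" using abs_ge_minus_self[of "d * b s 0 - 1"] by linarith
    then have "d * b s 0 > 1/2" by simp
    then show "1 / (2 * (T - s)) \<le> b s 0" using d unfolding d_def[symmetric] by (simp add: field_simps)
  qed (use t2 in auto)
qed

lemma no_cos_blowup:
  assumes a: "0 < a" "a \<le> 1"
  and plat: "\<And>x. x \<in> {-a..a} \<Longrightarrow> b 0 x = mv"
  and maxb: "\<And>x. x \<in> {-pi..pi} \<Longrightarrow> b 0 x \<le> mv"
  and endp: "b 0 (-pi) < mv"
  and cbu: "cos_blowup T b"
  shows False
proof -
  have api: "a \<le> pi" using a pi_gt3 by linarith
  define c where "c = 1 / (mv - b 0 (-pi))"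
  have c: "c > 0" using endp by (simp add: c_def)
  have W0: "Wf c 0 = mv" using Wf_0[of c] endp by (simp add: c_def)
  have plW: "\<And>x. x \<in> {-a..a} \<Longrightarrow> b 0 x = Wf c 0" using plat W0 by simp
  have Wd: "(Wf c has_real_derivative R t (Wf c t)) (at t within {0..t1})"
    if "0 \<le> t1" "t1 < T" "\<forall>s\<in>{0..t1}. psi c s \<noteq> 0" "t \<in> {0..t1}" for t1 t
    using W_deriv[OF that(1,2,4)] that(3,4) by blast
  have bound: "integral {0..t1} (Wf c) \<le> ln (pi / a)"
    if t1: "0 \<le> t1" "t1 < T" and nz: "\<forall>s\<in>{0..t1}. psi c s \<noteq> 0" for t1
    by (rule plateau[OF t1 Wd[OF t1 nz] a(1) api plW])
  have cW: "continuous_on {0..t1} (Wf c)"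
    if t1: "0 \<le> t1" "t1 < T" and nz: "\<forall>s\<in>{0..t1}. psi c s \<noteq> 0" for t1
    by (rule deriv_cont[OF Wd[OF t1 nz]])
  show False
  proof (cases "\<exists>t\<in>{0..<T}. psi c t \<le> 0")
    case True
    then obtain ts where ts: "ts \<in> {0..<T}" "psi c ts \<le> 0" by blast
    have cps: "continuous_on {0..ts} (psi c)" using psi_cont[of ts c] ts by auto
    have psi0: "psi c 0 = c" by (rule psi_0)
    define Z where "Z = {t \<in> {0..ts}. psi c t = 0}"
    have "\<exists>x\<ge>0. x \<le> ts \<and> psi c x = 0"
      by (rule IVT2'[OF ts(2) _ _ cps]) (use psi0 c ts in auto)
    then have Zne: "Z \<noteq> {}" unfolding Z_def by auto
    have "closed Z" unfolding Z_def by (rule continuous_closed_preimage_constant[OF cps closed_atLeastAtMost])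
    moreover have "bounded Z" unfolding Z_def by (rule bounded_subset[OF compact_imp_bounded[OF compact_Icc]]) auto
    ultimately have Zc: "compact Z" by (simp add: compact_eq_bounded_closed)
    obtain tau where tau: "tau \<in> Z" "\<And>t. t \<in> Z \<Longrightarrow> tau \<le> t"
      using compact_attains_inf[OF Zc Zne] by blast
    have tau1: "0 \<le> tau" "tau \<le> ts" "psi c tau = 0" using tau(1) unfolding Z_def by auto
    have tauT: "tau < T" using tau1 ts by auto
    have taup: "tau > 0" using tau1 psi0 c by (cases "tau = 0") auto
    have pos: "psi c t > 0" if t: "t \<in> {0..<tau}" for t
    proof (rule ccontr)
      assume "\<not> psi c t > 0"
      then have "psi c t \<le> 0" by simp
      moreover have "continuous_on {0..t} (psi c)" using continuous_on_subset[OF cps] t tau1 by auto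
      ultimately have "\<exists>x\<ge>0. x \<le> t \<and> psi c x = 0"
        by (intro IVT2') (use psi0 c t in auto)
      then obtain x where x: "0 \<le> x" "x \<le> t" "psi c x = 0" by blast
      then have "x \<in> Z" unfolding Z_def using t tau1 by auto
      then show False using tau(2)[of x] x t by auto
    qed
    have nzt: "\<forall>s\<in>{0..t1}. psi c s \<noteq> 0" if t1: "t1 \<in> {0..<tau}" for t1
    proof
      fix s assume s: "s \<in> {0..t1}"
      then have "s \<in> {0..<tau}" using t1 by auto
      then show "psi c s \<noteq> 0" using pos by force
    qed
    obtain U where U: "\<And>s. s \<in> {0..tau} \<Longrightarrow> \<bar>u s\<bar> \<le> U"
      using cont_bound[OF compact_Icc u_cont[OF tau1(1) tauT]] by blast
    have cps': "continuous_on {0..tau} (\<lambda>s. - (2 * u s + p s) * psi c s - 1)"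
      using u_cont[OF tau1(1) tauT] p_cont[OF tau1(1) tauT] psi_cont[OF tau1(1) tauT] by (intro continuous_intros)
    obtain M0 where M0: "\<And>s. s \<in> {0..tau} \<Longrightarrow> \<bar>- (2 * u s + p s) * psi c s - 1\<bar> \<le> M0"
      using cont_bound[OF compact_Icc cps'] by blast
    define M where "M = \<bar>M0\<bar> + 1"
    have M: "M > 0" unfolding M_def by simp
    have psi_le: "psi c s \<le> M * (tau - s)" if s: "s \<in> {0..<tau}" for s
    proof -
      have "psi c s + M * s \<le> psi c tau + M * tau"
      proof (rule DERIV_nonneg_imp_increasing_open[where f="\<lambda>t. psi c t + M * t"])
        show "s \<le> tau" using s by auto
      next
        fix x assume x: "s < x" "x < tau"
        have "(psi c has_real_derivative - (2 * u x + p x) * psi c x - 1) (at x within {0..tau})"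
          by (rule psi_deriv[OF tau1(1) tauT]) (use x s in auto)
        then have "(psi c has_real_derivative - (2 * u x + p x) * psi c x - 1) (at x)"
          using at_within_Icc_at[of 0 x tau] x s by auto
        then have "((\<lambda>t. psi c t + M * t) has_real_derivative (- (2 * u x + p x) * psi c x - 1) + M * 1) (at x)"
          by (rule DERIV_add[OF _ DERIV_cmult[OF DERIV_ident]])
        then have "((\<lambda>t. psi c t + M * t) has_real_derivative (- (2 * u x + p x) * psi c x - 1) + M) (at x)"
          by simp
        moreover have "(- (2 * u x + p x) * psi c x - 1) + M \<ge> 0"
          using M0[of x] x s unfolding M_def by auto
        ultimately show "\<exists>y. ((\<lambda>t. psi c t + M * t) has_real_derivative y) (at x) \<and> 0 \<le> y" by blast
      next
        show "continuous_on {s..tau} (\<lambda>t. psi c t + M * t)"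
          using continuous_on_subset[OF psi_cont[OF tau1(1) tauT, of c]] s by (intro continuous_intros) auto
      qed
      then show ?thesis using tau1 by (simp add: algebra_simps)
    qed
    have lb: "(1 / M) / (tau - s) - U \<le> Wf c s" if s: "s \<in> {0..<tau}" for s
    proof -
      have ps: "psi c s > 0" using pos[OF s] .
      have "1 / (M * (tau - s)) \<le> 1 / psi c s"
        using psi_le[OF s] ps by (intro divide_left_mono) auto
      moreover have "- U \<le> u s" using U[of s] s by auto
      ultimately show ?thesis unfolding Wf_def by (simp add: field_simps)
    qed
    obtain t1 where t1: "t1 \<in> {0..<tau}" "integral {0..t1} (Wf c) > ln (pi / a)"
    proof -
      have "\<exists>t1\<in>{0..<tau}. integral {0..t1} (Wf c) > ln (pi / a)"
      proof (rule log_div[OF taup _ _ lb])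
        show "0 < 1 / M" using M by simp
      next
        fix t1 assume t1: "t1 \<in> {0..<tau}"
        show "continuous_on {0..t1} (Wf c)"
          by (rule cW) (use t1 tauT nzt in \<open>auto\<close>)
      qed
      then show ?thesis using that by blast
    qed
    have "integral {0..t1} (Wf c) \<le> ln (pi / a)"
      by (rule bound) (use t1 tauT nzt in \<open>auto\<close>)
    then show False using t1 by linarith
  next
    case False
    then have pos: "\<And>t. t \<in> {0..<T} \<Longrightarrow> psi c t \<noteq> 0" by force
    have nz: "\<forall>s\<in>{0..t1}. psi c s \<noteq> 0" if "0 \<le> t1" "t1 < T" for t1 using pos that by auto
    obtain t2 where t2: "t2 \<in> {0..<T}" "\<And>s. s \<in> {t2..<T} \<Longrightarrow> 1 / (2 * (T - s)) \<le> b s 0"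
      using profile[OF cbu] by blast
    have lb: "(1/2) / (T - s) - 0 \<le> Wf c s" if s: "s \<in> {t2..<T}" for s
    proof -
      have s0: "0 \<le> s" "s < T" using s t2 by auto
      have "b s 0 \<le> Wf c s"
        by (rule compare[OF s0 Wd[OF s0 nz[OF s0]]]) (use maxb W0 in auto)
      then show ?thesis using t2(2)[OF s] by simp
    qed
    obtain t1 where t1: "t1 \<in> {t2..<T}" "integral {t2..t1} (Wf c) > ln (pi / a) - integral {0..t2} (Wf c)"
    proof -
      have "\<exists>t1\<in>{t2..<T}. integral {t2..t1} (Wf c) > ln (pi / a) - integral {0..t2} (Wf c)"
      proof (rule log_div[OF _ _ _ lb])
        show "t2 < T" using t2 by auto
        show "0 < (1/2::real)" by simp
      next
        fix t1 assume t1: "t1 \<in> {t2..<T}"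
        have "continuous_on {0..t1} (Wf c)" by (rule cW) (use t1 t2 nz in auto)
        then show "continuous_on {t2..t1} (Wf c)" by (rule continuous_on_subset) (use t2 in auto)
      qed
      then show ?thesis using that by blast
    qed
    have t10: "0 \<le> t1" "t1 < T" using t1 t2 by auto
    have "integral {0..t2} (Wf c) + integral {t2..t1} (Wf c) = integral {0..t1} (Wf c)"
      by (rule Henstock_Kurzweil_Integration.integral_combine) (use t1 t2 cW[OF t10 nz[OF t10]] in \<open>auto intro: integrable_continuous_interval\<close>)
    moreover have "integral {0..t1} (Wf c) \<le> ln (pi / a)" by (rule bound[OF t10 nz[OF t10]])
    ultimately show False using t1 by linarith
  qed
qed

end

lemma sin_lip: "\<bar>sin x - sin y\<bar> \<le> \<bar>x - y\<bar>" for x y :: real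
proof -
  have "norm (sin x - sin y) \<le> 1 * norm (x - y)"
    by (rule field_differentiable_bound[where S=UNIV and f=sin and f'=cos]) (auto intro: DERIV_sin simp: abs_cos_le_one)
  then show ?thesis by simp
qed

lemma cos_lip: "\<bar>cos x - cos y\<bar> \<le> \<bar>x - y\<bar>" for x y :: real
proof -
  have "norm (cos x - cos y) \<le> 1 * norm (x - y)"
    by (rule field_differentiable_bound[where S=UNIV and f=cos and f'="\<lambda>z. - sin z"]) (auto intro: DERIV_cos)
  then show ?thesis by simp
qed

definition clp :: "real \<Rightarrow> real \<Rightarrow> real" where "clp a x = max (-a) (min a x)"
definition qf :: "real \<Rightarrow> real \<Rightarrow> real" where "qf a x = cos (x - clp a x)"

lemma clp_abs: "0 \<le> a \<Longrightarrow> \<bar>clp a x\<bar> \<le> a"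
  unfolding clp_def by auto

lemma clp_lip: "0 \<le> a \<Longrightarrow> \<bar>(x - clp a x) - (y - clp a y)\<bar> \<le> \<bar>x - y\<bar>"
  unfolding clp_def by (auto simp: max_def min_def abs_if)

lemma qf_deriv:
  assumes a: "0 < a"
  shows "(qf a has_real_derivative - sin (x - clp a x)) (at x)"
proof -
  consider "x < -a" | "x = -a" | "-a < x \<and> x < a" | "x = a" | "x > a" by linarith
  then show ?thesis
  proof cases
    case 1
    have "((\<lambda>y. cos (y + a)) has_real_derivative - sin (x + a)) (at x)"
      by (rule derivative_eq_intros | simp)+
    then have "(qf a has_real_derivative - sin (x + a)) (at x)"
      by (rule has_field_derivative_transform_within_open[where S="{..< -a}"]) (use 1 in \<open>auto simp: qf_def clp_def\<close>)
    then show ?thesis using 1 by (simp add: clp_def)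
  next
    case 2
    have g: "((\<lambda>y. cos (y + a)) has_real_derivative 0) (at x)"
      using DERIV_cos[of "x + a"] 2 by (auto intro!: derivative_eq_intros)
    have "(qf a has_real_derivative 0) (at x)"
      by (rule deriv_glue[OF g DERIV_const[of 1], where d="2 * a"]) (use 2 a in \<open>auto simp: qf_def clp_def\<close>)
    then show ?thesis using 2 a by (simp add: clp_def)
  next
    case 3
    have "(qf a has_real_derivative 0) (at x)"
      by (rule has_field_derivative_transform_within_open[OF DERIV_const[of 1], where S="{-a<..<a}"]) (use 3 in \<open>auto simp: qf_def clp_def\<close>)
    then show ?thesis using 3 by (simp add: clp_def)
  next
    case 4
    have h: "((\<lambda>y. cos (y - a)) has_real_derivative 0) (at x)"
      using DERIV_cos[of "x - a"] 4 by (auto intro!: derivative_eq_intros)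
    have "(qf a has_real_derivative 0) (at x)"
      by (rule deriv_glue[OF DERIV_const[of 1] h, where d="2 * a"]) (use 4 a in \<open>auto simp: qf_def clp_def\<close>)
    then show ?thesis using 4 a by (simp add: clp_def)
  next
    case 5
    have "((\<lambda>y. cos (y - a)) has_real_derivative - sin (x - a)) (at x)"
      by (rule derivative_eq_intros | simp)+
    then have "(qf a has_real_derivative - sin (x - a)) (at x)"
      by (rule has_field_derivative_transform_within_open[where S="{a<..}"]) (use 5 a in \<open>auto simp: qf_def clp_def\<close>)
    then show ?thesis using 5 a by (simp add: clp_def)
  qed
qed

lemma qf_cont: "0 < a \<Longrightarrow> continuous_on UNIV (qf a)"
  using qf_deriv by (meson DERIV_continuous continuous_on_eq_continuous_within)

lemma hold1:
  fixes s A L d D :: real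
  assumes s: "0 < s" "s \<le> 1" and d: "0 \<le> d" and L: "D \<le> L * d" "L \<le> A" "0 \<le> L" and A: "D \<le> A"
  shows "D \<le> A * d powr s"
proof (cases "d \<le> 1")
  case True
  have "d powr 1 \<le> d powr s" by (rule powr_mono') (use s d True in auto)
  then have "d \<le> d powr s" using d by simp
  have "D \<le> L * d" by (rule L)
  also have "\<dots> \<le> A * d" using L d by (intro mult_right_mono) auto
  also have "\<dots> \<le> A * d powr s" using \<open>d \<le> d powr s\<close> L by (intro mult_left_mono) auto
  finally show ?thesis .
next
  case False
  then have "1 \<le> d powr s" using s by (intro ge_one_powr_ge_zero) auto
  then have "A * 1 \<le> A * d powr s" using L by (intro mult_left_mono) auto
  then show ?thesis using A by simp
qed

lemma hold2:
  fixes e a d D c :: real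
  assumes e: "0 < e" "e < 1" and a: "0 < a" and d: "0 \<le> d" and c: "0 \<le> c"
  and D1: "D \<le> c * d" and D2: "D \<le> c * a"
  shows "D \<le> c * a powr e * d powr (1 - e)"
proof (cases "d \<le> a")
  case True
  show ?thesis
  proof (cases "d = 0")
    case True
    then show ?thesis using D1 by simp
  next
    case False
    then have dp: "d > 0" using d by simp
    have "d = d powr e * d powr (1 - e)" using dp by (simp add: powr_add[symmetric])
    moreover have "d powr e \<le> a powr e" using True d e by (intro powr_mono2) auto
    ultimately have "d \<le> a powr e * d powr (1 - e)"
      by (metis mult_right_mono powr_ge_zero)
    then have "c * d \<le> c * (a powr e * d powr (1 - e))" using c by (intro mult_left_mono) auto
    then show ?thesis using D1 by (simp add: mult.assoc)
  qed
next
  case False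
  have "a = a powr e * a powr (1 - e)" using a by (simp add: powr_add[symmetric])
  moreover have "a powr (1 - e) \<le> d powr (1 - e)" using False a e by (intro powr_mono2) auto
  ultimately have "a \<le> a powr e * d powr (1 - e)"
    by (metis mult_left_mono powr_ge_zero)
  then have "c * a \<le> c * (a powr e * d powr (1 - e))" using c by (intro mult_left_mono) auto
  then show ?thesis using D2 by (simp add: mult.assoc)
qed

theorem theorem1p2:
  fixes \<epsilon> \<delta> \<mu> :: real
  assumes "\<epsilon> > 0" and "\<delta> > 0" and "\<mu> > 0"
  shows "\<exists>b0 :: real \<Rightarrow> real.
           integral {-pi..pi} b0 = 0 \<and>
           holder_norm_le (2 - \<epsilon>) (\<lambda>x. b0 x - \<mu> * cos x) (\<delta> * \<mu>) \<and>
           \<not> (\<exists>T > 0. \<exists>b. is_solution T b0 b \<and> cos_blowup T b)"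
proof -
  note eps = assms(1) and del = assms(2) and mu = assms(3)
  define a where "a = min 1 (min (\<delta>/10) ((\<delta>/4) powr (1/\<epsilon>)))"
  have a: "0 < a" "a \<le> 1" "a \<le> \<delta>/10" "a \<le> (\<delta>/4) powr (1/\<epsilon>)"
    unfolding a_def using del by auto
  have api: "a < pi" using a(2) pi_gt3 by linarith
  define Kc where "Kc = integral {-pi..pi} (qf a) / (2 * pi)"
  define b0 where "b0 x = \<mu> * qf a x - \<mu> * Kc" for x
  have cq: "continuous_on UNIV (qf a)" by (rule qf_cont[OF a(1)])
  have iq: "qf a integrable_on {-pi..pi}"
    by (rule integrable_continuous_interval) (rule continuous_on_subset[OF cq], simp)
  have mean: "integral {-pi..pi} b0 = 0"
  proof -
    have "integral {-pi..pi} b0 = integral {-pi..pi} (\<lambda>x. \<mu> * qf a x) - integral {-pi..pi} (\<lambda>x. \<mu> * Kc)"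
    proof (unfold b0_def, rule integral_diff)
      have "continuous_on {-pi..pi} (\<lambda>x. \<mu> * qf a x)"
        by (intro continuous_intros continuous_on_subset[OF cq]) simp
      then show "(\<lambda>x. \<mu> * qf a x) integrable_on {-pi..pi}" by (rule integrable_continuous_interval)
    qed (rule integrable_const_ivl)
    also have "\<dots> = \<mu> * integral {-pi..pi} (qf a) - \<mu> * Kc * (2 * pi)" by simp
    also have "\<dots> = 0" unfolding Kc_def by simp
    finally show ?thesis .
  qed
  have qdiff: "\<bar>qf a x - cos x\<bar> \<le> a" for x
    using cos_lip[of "x - clp a x" x] clp_abs[of a x] a(1) unfolding qf_def by simp
  have Kb: "\<bar>Kc\<bar> \<le> a"
  proof -
    have "(cos has_integral (sin pi - sin (-pi))) {-pi..pi}"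
      by (rule fundamental_theorem_of_calculus) (auto intro!: derivative_eq_intros simp: has_real_derivative_iff_has_vector_derivative[symmetric])
    then have ic: "(cos has_integral 0) {-pi..pi}" by simp
    have iqc: "(\<lambda>x. qf a x - cos x) integrable_on {-pi..pi}" using iq ic by (intro integrable_diff) auto
    have "integral {-pi..pi} (\<lambda>x. qf a x - cos x) = integral {-pi..pi} (qf a) - integral {-pi..pi} cos"
      by (rule integral_diff) (use iq ic in \<open>auto intro: has_integral_integrable\<close>)
    then have e: "integral {-pi..pi} (qf a) = integral {-pi..pi} (\<lambda>x. qf a x - cos x)"
      using integral_unique[OF ic] by simp
    have "norm (integral {-pi..pi} (\<lambda>x. qf a x - cos x)) \<le> integral {-pi..pi} (\<lambda>x. a)"
      by (rule integral_norm_bound_integral) (use iqc qdiff in auto)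
    then have "\<bar>integral {-pi..pi} (qf a)\<bar> \<le> 2 * pi * a" unfolding e by simp
    then show ?thesis unfolding Kc_def by (simp add: abs_div field_simps)
  qed
  define h where "h x = b0 x - \<mu> * cos x" for x
  define h' where "h' x = \<mu> * (- sin (x - clp a x)) + \<mu> * sin x" for x
  have hd: "(h has_real_derivative h' x) (at x)" for x
  proof -
    have "((\<lambda>x. \<mu> * qf a x - \<mu> * Kc - \<mu> * cos x) has_real_derivative \<mu> * (- sin (x - clp a x)) - 0 - \<mu> * (- sin x)) (at x)"
      by (intro DERIV_diff DERIV_cmult qf_deriv[OF a(1)] DERIV_const DERIV_cos)
    then show ?thesis unfolding h_def[abs_def] h'_def b0_def by simp
  qed
  have hb: "\<bar>h x\<bar> \<le> 2 * \<mu> * a" for x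
  proof -
    have "h x = \<mu> * (qf a x - cos x) - \<mu> * Kc" unfolding h_def b0_def by (simp add: algebra_simps)
    also have "\<bar>\<dots>\<bar> \<le> \<mu> * \<bar>qf a x - cos x\<bar> + \<mu> * \<bar>Kc\<bar>"
      using mu abs_triangle_ineq4[of "\<mu> * (qf a x - cos x)" "\<mu> * Kc"] by (simp add: abs_mult)
    also have "\<dots> \<le> \<mu> * a + \<mu> * a" using qdiff[of x] Kb mu by (intro add_mono mult_left_mono) auto
    finally show ?thesis by simp
  qed
  have h'b: "\<bar>h' x\<bar> \<le> \<mu> * a" for x
  proof -
    have "h' x = \<mu> * (sin x - sin (x - clp a x))" unfolding h'_def by (simp add: algebra_simps)
    also have "\<bar>\<dots>\<bar> \<le> \<mu> * a"
      using sin_lip[of x "x - clp a x"] clp_abs[of a x] a(1) mu by (simp add: abs_mult)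
    finally show ?thesis .
  qed
  have h'lip: "\<bar>h' x - h' y\<bar> \<le> 2 * \<mu> * \<bar>x - y\<bar>" for x y
  proof -
    have "h' x - h' y = \<mu> * ((sin x - sin y) - (sin (x - clp a x) - sin (y - clp a y)))"
      unfolding h'_def by (simp add: algebra_simps)
    moreover have "\<bar>(sin x - sin y) - (sin (x - clp a x) - sin (y - clp a y))\<bar> \<le> 2 * \<bar>x - y\<bar>"
      using sin_lip[of x y] sin_lip[of "x - clp a x" "y - clp a y"] clp_lip[OF less_imp_le[OF a(1)], of x y]
        abs_triangle_ineq4[of "sin x - sin y" "sin (x - clp a x) - sin (y - clp a y)"] by linarith
    ultimately show ?thesis using mu by (simp add: abs_mult)
  qed
  have h'2: "\<bar>h' x - h' y\<bar> \<le> 2 * \<mu> * a" for x y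
    using h'b[of x] h'b[of y] by linarith
  have hlip: "\<bar>h x - h y\<bar> \<le> \<mu> * a * \<bar>x - y\<bar>" for x y
  proof -
    have "norm (h x - h y) \<le> (\<mu> * a) * norm (x - y)"
      by (rule field_differentiable_bound[where S=UNIV and f=h and f'=h']) (use hd h'b in auto)
    then show ?thesis by simp
  qed
  have h2: "\<bar>h x - h y\<bar> \<le> 4 * \<mu> * a" for x y
    using hb[of x] hb[of y] by linarith
  have hlam: "(\<lambda>x. b0 x - \<mu> * cos x) = h" unfolding h_def by simp
  have holder: "holder_norm_le (2 - \<epsilon>) h (\<delta> * \<mu>)"
  proof (cases "\<epsilon> \<ge> 2")
    case True
    have hk: "holder_k (2 - \<epsilon>) = 0" unfolding holder_k_def using True by simp
    have "2 * \<mu> * a \<le> \<delta> * \<mu>" using a(3) mu del by (simp add: field_simps)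
    then show ?thesis unfolding holder_norm_le_def hk using True hb
      by (intro exI[of _ "\<lambda>j. h"] exI[of _ "\<lambda>j. 2 * \<mu> * a"] exI[of _ 0]) auto
  next
    case False
    show ?thesis
    proof (cases "\<epsilon> \<ge> 1")
      case True
      have s: "0 < 2 - \<epsilon>" "2 - \<epsilon> \<le> 1" using True False by auto
      have "\<lceil>2 - \<epsilon>\<rceil> = 1" using s by (simp add: ceiling_eq_iff)
      then have hk: "holder_k (2 - \<epsilon>) = 0" unfolding holder_k_def using s by simp
      have ha: "holder_a (2 - \<epsilon>) = 2 - \<epsilon>" unfolding holder_a_def using s hk by simp
      have hol: "\<bar>h x - h y\<bar> \<le> 4 * \<mu> * a * \<bar>x - y\<bar> powr (2 - \<epsilon>)" for x y
        by (rule hold1[OF s _ hlip _ _ h2]) (use mu a in auto)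
      have "2 * \<mu> * a + 4 * \<mu> * a \<le> \<delta> * \<mu>" using a(3) mu del by (simp add: field_simps)
      then show ?thesis unfolding holder_norm_le_def hk ha using s hb hol
        by (intro exI[of _ "\<lambda>j. h"] exI[of _ "\<lambda>j. 2 * \<mu> * a"] exI[of _ "4 * \<mu> * a"]) auto
    next
      case False
      have e1: "\<epsilon> < 1" using False by simp
      have s: "1 < 2 - \<epsilon>" "2 - \<epsilon> < 2" using e1 eps by auto
      have "\<lceil>2 - \<epsilon>\<rceil> = 2" using s by (simp add: ceiling_eq_iff)
      then have hk: "holder_k (2 - \<epsilon>) = Suc 0" unfolding holder_k_def using s by simp
      have ha: "holder_a (2 - \<epsilon>) = 1 - \<epsilon>" unfolding holder_a_def using s hk by simp
      have hol: "\<bar>h' x - h' y\<bar> \<le> 2 * \<mu> * a powr \<epsilon> * \<bar>x - y\<bar> powr (1 - \<epsilon>)" for x y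
        by (rule hold2[OF eps e1 a(1) _ _ h'lip h'2]) (use mu in auto)
      have ape: "a powr \<epsilon> \<le> \<delta> / 4"
      proof -
        have "a powr \<epsilon> \<le> ((\<delta>/4) powr (1/\<epsilon>)) powr \<epsilon>" using a eps by (intro powr_mono2) auto
        also have "\<dots> = \<delta> / 4" using eps del by (simp add: powr_powr)
        finally show ?thesis .
      qed
      have tot: "2 * \<mu> * a + \<mu> * a + 2 * \<mu> * a powr \<epsilon> \<le> \<delta> * \<mu>"
      proof -
        have "3 * a + 2 * a powr \<epsilon> \<le> \<delta>" using a(3) ape del by linarith
        then have "\<mu> * (3 * a + 2 * a powr \<epsilon>) \<le> \<mu> * \<delta>" using mu by (intro mult_left_mono) auto
        then show ?thesis by (simp add: algebra_simps)
      qed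
      show ?thesis unfolding holder_norm_le_def hk ha
      proof (intro exI[of _ "\<lambda>j. if j = 0 then h else h'"] exI[of _ "\<lambda>j. if j = 0 then 2 * \<mu> * a else \<mu> * a"]
          exI[of _ "2 * \<mu> * a powr \<epsilon>"] conjI ballI allI impI)
        fix j x assume "j < Suc 0" "x \<in> {-pi..pi}"
        then show "((if j = 0 then h else h') has_real_derivative (if Suc j = 0 then h else h') x) (at x within {-pi..pi})"
          using hd[of x] by (simp add: has_field_derivative_at_within)
      next
        fix j x assume "j \<le> Suc 0" "x \<in> {-pi..pi}"
        then show "\<bar>(if j = 0 then h else h') x\<bar> \<le> (if j = 0 then 2 * \<mu> * a else \<mu> * a)"
          using hb h'b by auto
      next
        fix x y assume "x \<in> {-pi..pi}" "y \<in> {-pi..pi}"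
        then show "\<bar>(if Suc 0 = 0 then h else h') x - (if Suc 0 = 0 then h else h') y\<bar> \<le> 2 * \<mu> * a powr \<epsilon> * \<bar>x - y\<bar> powr (1 - \<epsilon>)"
          using hol by simp
      next
        show "(\<Sum>j\<le>Suc 0. if j = 0 then 2 * \<mu> * a else \<mu> * a) + (if 0 < 2 - \<epsilon> then 2 * \<mu> * a powr \<epsilon> else 0) \<le> \<delta> * \<mu>"
          using tot s by simp
      qed auto
    qed
  qed
  have nosol: "\<not> (\<exists>T > 0. \<exists>b. is_solution T b0 b \<and> cos_blowup T b)"
  proof
    assume "\<exists>T > 0. \<exists>b. is_solution T b0 b \<and> cos_blowup T b"
    then obtain T b where T: "T > 0" and sol: "is_solution T b0 b" and cbu: "cos_blowup T b" by blast
    from sol obtain bt bx where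
      c1: "continuous_on ({0..<T} \<times> {-pi..pi}) (\<lambda>(t,x). b t x)" and
      c2: "continuous_on ({0..<T} \<times> {-pi..pi}) (\<lambda>(t,x). bt t x)" and
      c3: "continuous_on ({0..<T} \<times> {-pi..pi}) (\<lambda>(t,x). bx t x)" and
      c4: "\<forall>t\<in>{0..<T}. \<forall>x\<in>{-pi..pi}.
           ((\<lambda>s. b s x) has_real_derivative bt t x) (at t within {0..<T}) \<and>
           ((\<lambda>y. b t y) has_real_derivative bx t x) (at x within {-pi..pi}) \<and>
           bt t x + integral {-pi..x} (b t) * bx t x - (b t x)\<^sup>2
             + (1/pi) * integral {-pi..pi} (\<lambda>y. (b t y)\<^sup>2)
           = (1/pi) * integral {0..t} (\<lambda>s. integral {-pi..pi} (\<lambda>y. (b s y)\<^sup>2)) * b t x" and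
      c5: "\<forall>t\<in>{0..<T}. integral {-pi..pi} (b t) = 0" and
      c6: "\<forall>x\<in>{-pi..pi}. b 0 x = b0 x"
      unfolding is_solution_def by blast
    interpret S: sol T b bt bx
      by (rule sol.intro) (use T c1 c2 c3 c4 c5 in auto)
    have b0x: "b 0 x = b0 x" if "x \<in> {-pi..pi}" for x using c6 that by auto
    show False
    proof (rule S.no_cos_blowup[OF a(1) a(2) _ _ _ cbu, where mv = "\<mu> - \<mu> * Kc"])
      fix x assume x: "x \<in> {-a..a}"
      then have "x \<in> {-pi..pi}" using api by auto
      moreover have "clp a x = x" using x unfolding clp_def by auto
      ultimately show "b 0 x = \<mu> - \<mu> * Kc" using b0x by (simp add: b0_def qf_def)
    next
      fix x assume x: "x \<in> {-pi..pi}"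
      have "\<mu> * qf a x \<le> \<mu> * 1" using mu unfolding qf_def by (intro mult_left_mono) auto
      then show "b 0 x \<le> \<mu> - \<mu> * Kc" using b0x[OF x] by (simp add: b0_def)
    next
      have "clp a (-pi) = -a" unfolding clp_def using api a(1) by auto
      then have qe: "qf a (-pi) = - cos a" unfolding qf_def by simp
      have pc: "cos a > 0" using a api pi_gt3 by (intro cos_gt_zero) auto
      have "0 < \<mu> * cos a" using mu pc by simp
      then have "\<mu> * qf a (-pi) < \<mu> * 1" using qe mu by simp
      then show "b 0 (-pi) < \<mu> - \<mu> * Kc" using b0x[of "-pi"] by (simp add: b0_def)
    qed
  qed
  show ?thesis
    by (rule exI[of _ b0]) (use mean holder hlam nosol in auto)
qed

end
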